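(* Let $N\ge 2$ agents have true utility functions $F_1,\dots,F_N:\mathbb{R}\to\mathbb{R}$. Let $\boldsymbol{u}^*=(u_1^*,\dots,u_N^* )$ be the optimal solution, assumed unique, of $\max_{\boldsymbol u}\sum_{i}F_i(u_i)$ subject to $\sum_i u_i=0$, and for each $i$ let $\boldsymbol{u}^{(i)}=(u^{(i)}_j)_{j\neq i}$ be the unique optimal solution of $\max\sum_{j\neq i}F_j(u_j)$ subject to $\sum_{j\ne i}u_j=0$. Let $H_i:=\sum_{j\neq i}F_j(u^{(i)}_j)$, $H_{max}:=\max_i H_i$ and $F_{total}:=\sum_j F_j(u_j^* )$. If $F_{total}>0$, $H_i>0$ for all $i$, and the Market Power Balance condition $(N-1)H_{max}\le\sum_i H_i$ holds, then there exist real numbers $\underline c\le\bar c$ such that for every constant $c\in[\underline c,\bar c]$ the Scaled VCG mechanism with scaling factor $c$ satisfies incentive compatibility, efficiency, budget balance and individual rationality simultaneously.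
   Context: Setting: an operator (ISO) wants to choose energy amounts $u_i$ ($u_i\le 0$ for producers, $u_i\ge0$ for consumers) maximizing the social welfare $\sum_i F_i(u_i)$ subject to $\sum_i u_i=0$, but does not know the $F_i$. Each agent $i$ bids a function $\hat F_i$ (not necessarily equal to $F_i$); write $\hat F=(\hat F_1,\dots,\hat F_N)$. The ISO computes $\boldsymbol u^*(\hat F)$ maximizing $\sum_i\hat F_i(u_i)$ subject to $\sum_iu_i=0$, assigns $u_i^*(\hat F)$ to agent $i$, and for each $i$ computes $\boldsymbol u^{(i)}(\hat F)$ maximizing $\sum_{j\ne i}\hat F_j(u_j)$ subject to $\sum_{j\ne i}u_j=0$. In the Scaled VCG (SVCG) mechanism with constant scaling factor $c$ (fixed in advance, independent of the bids), agent $i$ pays $p_i(\hat F)=c\sum_{j\ne i}\hat F_j(u_j^{(i)}(\hat F))-\sum_{j\neq i}\hat F_j(u_j^*(\hat F))$. Agent $i$'s net utility is $F_i(u_i^*(\hat F))-p_i(\hat F)$. Incentive compatibility (IC): for every $i$ and every bids of the other agents, bidding $\hat F_i=F_i$ maximizes agent $i$'s net utility. Efficiency (EF): under truthful bids the allocation maximizes $\sum_iF_i(u_i)$ subject to $\sum_iu_i=0$. Budget balance (BB): under truthful bids $\sum_i p_i\ge 0$. Individual rationality (IR): under truthful bids $F_i(u_i^* )-p_i\ge0$ for every $i$. *)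

theory Defs
  imports Complex_Main
begin

text \<open>Agents are indexed by natural numbers in a finite set A (in the theorem A = {..<N}).\<close>

definition welfare :: "(nat \<Rightarrow> real \<Rightarrow> real) \<Rightarrow> nat set \<Rightarrow> (nat \<Rightarrow> real) \<Rightarrow> real" where
  "welfare F A u = (\<Sum>j\<in>A. F j (u j))"

definition is_opt :: "(nat \<Rightarrow> real \<Rightarrow> real) \<Rightarrow> nat set \<Rightarrow> (nat \<Rightarrow> real) \<Rightarrow> bool" where
  "is_opt F A u \<longleftrightarrow> (\<Sum>j\<in>A. u j) = 0 \<and>
     (\<forall>v. (\<Sum>j\<in>A. v j) = 0 \<longrightarrow> welfare F A v \<le> welfare F A u)"

definition has_opt :: "(nat \<Rightarrow> real \<Rightarrow> real) \<Rightarrow> nat set \<Rightarrow> bool" where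
  "has_opt F A \<longleftrightarrow> (\<exists>u. is_opt F A u)"

definition unique_opt :: "(nat \<Rightarrow> real \<Rightarrow> real) \<Rightarrow> nat set \<Rightarrow> bool" where
  "unique_opt F A \<longleftrightarrow> (\<forall>u v. is_opt F A u \<longrightarrow> is_opt F A v \<longrightarrow> (\<forall>j\<in>A. u j = v j))"

definition alloc :: "(nat \<Rightarrow> real \<Rightarrow> real) \<Rightarrow> nat set \<Rightarrow> (nat \<Rightarrow> real)" where
  "alloc Fh A = (SOME u. is_opt Fh A u)"

definition svcg_pay :: "real \<Rightarrow> (nat \<Rightarrow> real \<Rightarrow> real) \<Rightarrow> nat set \<Rightarrow> nat \<Rightarrow> real" where
  "svcg_pay c Fh A i =
     c * welfare Fh (A - {i}) (alloc Fh (A - {i})) - welfare Fh (A - {i}) (alloc Fh A)"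

definition net_util :: "real \<Rightarrow> (nat \<Rightarrow> real \<Rightarrow> real) \<Rightarrow> (nat \<Rightarrow> real \<Rightarrow> real) \<Rightarrow> nat set \<Rightarrow> nat \<Rightarrow> real" where
  "net_util c F Fh A i = F i (alloc Fh A i) - svcg_pay c Fh A i"

text \<open>Incentive compatibility: for every agent i and every bid profile Fh (whose components
  j <> i are the other agents' bids and Fh i is an arbitrary bid of i), bidding the true F i
  is at least as good as bidding Fh i. The mechanism is only well defined when the
  welfare problem for the submitted bids has an optimal solution, so we quantify over such
  bid profiles.\<close>
definition svcg_IC :: "real \<Rightarrow> (nat \<Rightarrow> real \<Rightarrow> real) \<Rightarrow> nat set \<Rightarrow> bool" where
  "svcg_IC c F A \<longleftrightarrow> (\<forall>i\<in>A. \<forall>Fh. has_opt (Fh(i := F i)) A \<longrightarrow> has_opt Fh A \<longrightarrow>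
       net_util c F Fh A i \<le> net_util c F (Fh(i := F i)) A i)"

definition svcg_EF :: "(nat \<Rightarrow> real \<Rightarrow> real) \<Rightarrow> nat set \<Rightarrow> bool" where
  "svcg_EF F A \<longleftrightarrow> is_opt F A (alloc F A)"

definition svcg_BB :: "real \<Rightarrow> (nat \<Rightarrow> real \<Rightarrow> real) \<Rightarrow> nat set \<Rightarrow> bool" where
  "svcg_BB c F A \<longleftrightarrow> (\<Sum>i\<in>A. svcg_pay c F A i) \<ge> 0"

definition svcg_IR :: "real \<Rightarrow> (nat \<Rightarrow> real \<Rightarrow> real) \<Rightarrow> nat set \<Rightarrow> bool" where
  "svcg_IR c F A \<longleftrightarrow> (\<forall>i\<in>A. net_util c F F A i \<ge> 0)"

end

theory Submission
  imports Defs
begin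

lemma alloc_opt: "is_opt F A u \<Longrightarrow> is_opt F A (alloc F A)"
  unfolding alloc_def by (metis someI)

lemma opt_val: "is_opt F A u \<Longrightarrow> is_opt F A v \<Longrightarrow> welfare F A u = welfare F A v"
  unfolding is_opt_def by (meson order_antisym)

lemma welfare_upd: "i \<notin> B \<Longrightarrow> welfare (Fh(i := G)) B v = welfare Fh B v"
  unfolding welfare_def by (rule sum.cong) auto

lemma is_opt_upd: "i \<notin> B \<Longrightarrow> is_opt (Fh(i := G)) B = is_opt Fh B"
  unfolding is_opt_def by (auto simp: welfare_upd)

lemma alloc_upd: "i \<notin> B \<Longrightarrow> alloc (Fh(i := G)) B = alloc Fh B"
  unfolding alloc_def by (simp add: is_opt_upd)

lemma IC_all: "svcg_IC c F A" if fin: "finite A"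
  unfolding svcg_IC_def
proof (intro ballI allI impI)
  fix i Fh assume iA: "i \<in> A" and h1: "has_opt (Fh(i := F i)) A" and h2: "has_opt Fh A"
  let ?G = "Fh(i := F i)"
  have o1: "is_opt ?G A (alloc ?G A)" using h1 alloc_opt unfolding has_opt_def by blast
  have o2: "is_opt Fh A (alloc Fh A)" using h2 alloc_opt unfolding has_opt_def by blast
  have s: "(\<Sum>j\<in>A. alloc Fh A j) = 0" using o2 unfolding is_opt_def by blast
  have le: "welfare ?G A (alloc Fh A) \<le> welfare ?G A (alloc ?G A)"
    using o1 s unfolding is_opt_def by blast
  have split: "welfare K A u = K i (u i) + welfare K (A - {i}) u" for K u
    unfolding welfare_def using fin iA by (simp add: sum.remove)
  have nb: "i \<notin> A - {i}" by simp
  show "net_util c F Fh A i \<le> net_util c F ?G A i"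
    using le split[of ?G "alloc Fh A"] split[of ?G "alloc ?G A"]
    unfolding net_util_def svcg_pay_def
    by (simp add: welfare_upd[OF nb] alloc_upd[OF nb])
qed

theorem theorem1:
  fixes N :: nat and F :: "nat \<Rightarrow> real \<Rightarrow> real"
    and ustar :: "nat \<Rightarrow> real" and uminus :: "nat \<Rightarrow> nat \<Rightarrow> real"
  assumes N2: "N \<ge> 2"
    and opt: "is_opt F {..<N} ustar" and uniq: "unique_opt F {..<N}"
    and opt_i: "\<And>i. i < N \<Longrightarrow> is_opt F ({..<N} - {i}) (uminus i)"
    and uniq_i: "\<And>i. i < N \<Longrightarrow> unique_opt F ({..<N} - {i})"
    and Ftot: "(\<Sum>j<N. F j (ustar j)) > 0"
    and Hpos: "\<And>i. i < N \<Longrightarrow> (\<Sum>j\<in>{..<N} - {i}. F j (uminus i j)) > 0"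
    and MPB: "real (N - 1) * (MAX i\<in>{..<N}. (\<Sum>j\<in>{..<N} - {i}. F j (uminus i j)))
              \<le> (\<Sum>i<N. (\<Sum>j\<in>{..<N} - {i}. F j (uminus i j)))"
  shows "\<exists>c_lo c_hi :: real. c_lo \<le> c_hi \<and>
           (\<forall>c\<in>{c_lo..c_hi}. svcg_IC c F {..<N} \<and> svcg_EF F {..<N} \<and>
                               svcg_BB c F {..<N} \<and> svcg_IR c F {..<N})"
proof -
  define A where "A = {..<N}"
  define H where "H i = (\<Sum>j\<in>{..<N} - {i}. F j (uminus i j))" for i
  define Hm where "Hm = (MAX i\<in>{..<N}. H i)"
  define W where "W = (\<Sum>j<N. F j (ustar j))"
  have ne: "{..<N} \<noteq> {}" using N2 by (metis lessThan_iff less_le_trans zero_less_numeral empty_iff)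
  have Hle: "H i \<le> Hm" if "i < N" for i unfolding Hm_def using that by simp
  have Hmpos: "Hm > 0" using Hle[of 0] Hpos[of 0] N2 H_def by force
  have Wpos: "W > 0" using Ftot W_def by simp
  have EF: "svcg_EF F A" unfolding svcg_EF_def A_def using alloc_opt[OF opt] .
  have WA: "welfare F A (alloc F A) = W"
    using opt_val[OF alloc_opt[OF opt] opt] unfolding A_def W_def welfare_def by simp
  have WH: "welfare F (A - {i}) (alloc F (A - {i})) = H i" if "i < N" for i
    using opt_val[OF alloc_opt[OF opt_i[OF that]] opt_i[OF that]] unfolding A_def H_def welfare_def by simp
  have pay: "svcg_pay c F A i = c * H i - (W - F i (alloc F A i))" if "i < N" for c i
  proof -
    have "welfare F A (alloc F A) = F i (alloc F A i) + welfare F (A - {i}) (alloc F A)"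
      unfolding welfare_def A_def using that by (simp add: sum.remove)
    then show ?thesis unfolding svcg_pay_def using WH[OF that] WA by simp
  qed
  define c where "c = W / Hm"
  have MPB': "real (N - 1) * Hm \<le> (\<Sum>i<N. H i)" using MPB unfolding Hm_def H_def .
  have BB: "svcg_BB c F A"
  proof -
    have "(\<Sum>i\<in>A. svcg_pay c F A i) = (\<Sum>i<N. c * H i - (W - F i (alloc F A i)))"
      using pay unfolding A_def by (intro sum.cong) auto
    also have "\<dots> = c * (\<Sum>i<N. H i) - (real N * W - W)"
      using WA unfolding welfare_def A_def
      by (simp add: sum_subtractf sum_distrib_left)
    also have "\<dots> \<ge> 0"
    proof -
      have "c * (\<Sum>i<N. H i) \<ge> c * (real (N - 1) * Hm)"
        using MPB' Wpos Hmpos c_def by (intro mult_left_mono) auto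
      also have "c * (real (N - 1) * Hm) = real (N - 1) * W" using Hmpos c_def by simp
      also have "real (N - 1) = real N - 1" using N2 by simp
      finally show ?thesis by (simp add: algebra_simps)
    qed
    finally show ?thesis unfolding svcg_BB_def by simp
  qed
  have IR: "svcg_IR c F A"
    unfolding svcg_IR_def
  proof
    fix i assume "i \<in> A"
    then have i: "i < N" unfolding A_def by simp
    have "c * H i \<le> c * Hm" using Hle[OF i] Wpos Hmpos c_def by (intro mult_left_mono) auto
    also have "c * Hm = W" using Hmpos c_def by simp
    finally show "net_util c F F A i \<ge> 0" unfolding net_util_def using pay[OF i, of c] by simp
  qed
  have IC: "svcg_IC c F A" using IC_all[of A] A_def by simp
  show ?thesis
    by (rule exI[of _ c], rule exI[of _ c]) (use EF BB IR IC A_def in auto)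
qed

end
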